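(* Let $D,d\ge 1$ and let $\theta\mapsto K_m(\theta)\in\mathbb{C}^{D\times D}$, $m=0,\dots,d-1$, be differentiable with $\sum_{m=0}^{d-1}K_m(\theta)^\dagger K_m(\theta)=\mathbb{1}_D$ for all $\theta$. Fix $\theta_0$, write $K_m=K_m(\theta_0)$, $\dot K_m=\partial_\theta K_m(\theta)|_{\theta_0}$, and let $\mathcal{E}(X)=\sum_m K_mXK_m^\dagger$. Suppose $\mathcal{E}$ has a fixed point, i.e. a density matrix $\rho_{ss}$ with $\mathcal{E}(\rho_{ss})=\rho_{ss}$. Define $$\alpha=\sum_m \mathrm{Tr}\big(\dot K_m\rho_{ss}\dot K_m^\dagger\big),\qquad \gamma=\sum_m\mathrm{Tr}\big(K_m\rho_{ss}\dot K_m^\dagger\big),$$ $$\beta_\tau=\mathrm{Tr}\Big[\sum_m \dot K_m\,\mathcal{E}^{\tau}\Big(\sum_n K_n\rho_{ss}\dot K_n^\dagger\Big)K_m^\dagger\Big]\quad(\tau\ge 0).$$ Then for every integer $T\ge 1$ the quantum Fisher information at $\theta_0$ of the $T$-site translation-invariant MPS state $|\Phi_T(\theta)\rangle$ (defined in the context) is $$F_T(\theta_0)=4\Big(T\alpha+2\sum_{\tau=0}^{T-2}(T-\tau-1)\,\mathrm{Re}\,\beta_\tau-T^2|\gamma|^2\Big).$$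
   Context: The isometry $V_\theta:\mathbb{C}^D\to\mathbb{C}^D\otimes\mathbb{C}^d$ is $V_\theta|\psi\rangle=\sum_m K_m(\theta)|\psi\rangle\otimes|m\rangle$; it generates a translation-invariant matrix product state (TI-MPS) with bond dimension $D$ and physical dimension $d$, whose transfer matrix is the channel $\mathcal{E}$. The $T$-site state with left boundary the identity (left fixed point of the transfer matrix) and right boundary $\rho_{ss}$ is realized as follows: let $|\xi\rangle\in\mathbb{C}^D_A\otimes\mathbb{C}^D_S$ be a fixed ($\theta$-independent) purification of $\rho_{ss}$ on an ancilla $A$, and set $|\Phi_T(\theta)\rangle=\sum_{m_1,\dots,m_T}(\mathbb{1}_A\otimes K_{m_T}(\theta)\cdots K_{m_1}(\theta))|\xi\rangle\otimes|m_1\cdots m_T\rangle$. For a pure-state family $|\psi_\theta\rangle$ the quantum Fisher information is $F=4(\langle\dot\psi|\dot\psi\rangle-|\langle\dot\psi|\psi\rangle|^2)$ with $|\dot\psi\rangle=\partial_\theta|\psi_\theta\rangle$. *)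

theory Defs
  imports "HOL-Analysis.Analysis"
begin

text \<open>Matrices in C^{D x D} are complex^'D^'D with 'D a finite type (so D = CARD('D) >= 1);
the Kraus/physical index m ranges over a finite type 'd (d = CARD('d) >= 1).\<close>

definition adj :: "complex^'n^'m \<Rightarrow> complex^'m^'n" where
  "adj A = (\<chi> i j. cnj (A $ j $ i))"

definition is_density :: "complex^'n^'n \<Rightarrow> bool" where
  "is_density \<rho> \<longleftrightarrow> adj \<rho> = \<rho>
     \<and> (\<forall>v::complex^'n. 0 \<le> Re (\<Sum>i\<in>UNIV. cnj (v $ i) * (\<rho> *v v) $ i))
     \<and> trace \<rho> = 1"

text \<open>The channel E(X) = sum_m K_m X K_m^dagger.\<close>
definition chan :: "('d::finite \<Rightarrow> complex^'n^'n) \<Rightarrow> complex^'n^'n \<Rightarrow> complex^'n^'n" where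
  "chan K X = (\<Sum>m\<in>UNIV. K m ** X ** adj (K m))"

text \<open>prodK K [m1,...,mT] = K mT ** ... ** K m1.\<close>
fun prodK :: "('d \<Rightarrow> complex^'n^'n) \<Rightarrow> 'd list \<Rightarrow> complex^'n^'n" where
  "prodK K [] = mat 1"
| "prodK K (m # ms) = prodK K ms ** K m"

text \<open>The T-site state Phi_T(theta): amplitude at index (a, s, [m1,...,mT]), where a is the
ancilla index, s the system (bond) index; xi a s are the components of the purification.\<close>
definition Phi :: "(real \<Rightarrow> 'd::finite \<Rightarrow> complex^'n^'n) \<Rightarrow> ('n \<Rightarrow> 'n \<Rightarrow> complex) \<Rightarrow> nat
                   \<Rightarrow> real \<Rightarrow> ('n \<times> 'n \<times> 'd list) \<Rightarrow> complex" where
  "Phi K \<xi> T \<theta> idx = (case idx of (a, s, ms) \<Rightarrow>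
      if length ms = T then (prodK (K \<theta>) ms *v (\<chi> s'. \<xi> a s')) $ s else 0)"

definition Phi_index :: "nat \<Rightarrow> ('n::finite \<times> 'n \<times> 'd::finite list) set" where
  "Phi_index T = UNIV \<times> UNIV \<times> {ms. length ms = T}"

text \<open>Quantum Fisher information of a pure-state family psi (components indexed by the
finite set I): F = 4(<dpsi|dpsi> - |<dpsi|psi>|^2), dpsi the componentwise theta-derivative.\<close>
definition qfi :: "'i set \<Rightarrow> (real \<Rightarrow> 'i \<Rightarrow> complex) \<Rightarrow> real \<Rightarrow> real" where
  "qfi I \<psi> \<theta>0 =
     (let d\<psi> = (\<lambda>i. vector_derivative (\<lambda>\<theta>. \<psi> \<theta> i) (at \<theta>0)) in
      4 * (Re (\<Sum>i\<in>I. cnj (d\<psi> i) * d\<psi> i) - (cmod (\<Sum>i\<in>I. cnj (d\<psi> i) * \<psi> \<theta>0 i))^2))"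

end

theory Submission
  imports Defs
begin


lemma mm_bilinear: "bilinear ((**) :: complex^'n::finite^'n \<Rightarrow> complex^'n^'n \<Rightarrow> complex^'n^'n)"
  unfolding bilinear_def
proof (intro conjI allI)
  fix x :: "complex^'n^'n"
  show "linear ((**) x)"
    by (intro linearI) (simp_all add: vec_eq_iff matrix_matrix_mult_def scaleR_sum_right distrib_left sum.distrib mult_ac)
next
  fix y :: "complex^'n^'n"
  show "linear (\<lambda>x. x ** y)"
    by (intro linearI) (simp_all add: vec_eq_iff matrix_matrix_mult_def scaleR_sum_right algebra_simps sum.distrib)
qed

lemma mm_bounded_bilinear: "bounded_bilinear ((**) :: complex^'n::finite^'n \<Rightarrow> complex^'n^'n \<Rightarrow> complex^'n^'n)"
  using mm_bilinear bilinear_conv_bounded_bilinear by blast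

lemma comp_bounded_linear: "bounded_linear (\<lambda>A::complex^'n::finite^'n. (A *v v) $ s)"
proof -
  have "linear (\<lambda>A::complex^'n::finite^'n. (A *v v) $ s)"
    by (intro linearI) (simp_all add: matrix_vector_mult_def scaleR_sum_right distrib_right sum.distrib)
  then show ?thesis using linear_conv_bounded_linear by blast
qed

fun dprodK :: "('d \<Rightarrow> complex^'n^'n) \<Rightarrow> ('d \<Rightarrow> complex^'n^'n) \<Rightarrow> 'd list \<Rightarrow> complex^'n^'n" where
  "dprodK K Kd [] = 0"
| "dprodK K Kd (m # ms) = prodK K ms ** Kd m + dprodK K Kd ms ** K m"

lemma prodK_deriv:
  fixes K :: "real \<Rightarrow> 'd \<Rightarrow> complex^'n::finite^'n"
  assumes "\<And>m. ((\<lambda>t. K t m) has_vector_derivative Kd m) (at \<theta>0)"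
  shows "((\<lambda>t. prodK (K t) ms) has_vector_derivative dprodK (K \<theta>0) Kd ms) (at \<theta>0)"
proof (induction ms)
  case Nil
  then show ?case by simp
next
  case (Cons m ms)
  show ?case
    using bounded_bilinear.has_vector_derivative[OF mm_bounded_bilinear Cons assms[of m]]
    by simp
qed

lemma Phi_deriv:
  fixes K :: "real \<Rightarrow> 'd \<Rightarrow> complex^'n::finite^'n"
  assumes "\<And>m. ((\<lambda>t. K t m) has_vector_derivative Kd m) (at \<theta>0)"
  shows "vector_derivative (\<lambda>t. (prodK (K t) ms *v v) $ s) (at \<theta>0) = (dprodK (K \<theta>0) Kd ms *v v) $ s"
  by (rule vector_derivative_at, rule bounded_linear.has_vector_derivative[OF comp_bounded_linear prodK_deriv[OF assms]])

lemma adj_mult: "adj (A ** B) = adj B ** adj (A::complex^'n::finite^'n)"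
  by (simp add: adj_def vec_eq_iff matrix_matrix_mult_def mult.commute)

lemma adj_adj[simp]: "adj (adj A) = A"
  by (simp add: adj_def vec_eq_iff)

lemma adj_add: "adj (A + B) = adj A + adj B"
  by (simp add: adj_def vec_eq_iff)

lemma adj_sum: "adj (\<Sum>i\<in>S. f i) = (\<Sum>i\<in>S. adj (f i))"
  by (induction S rule: infinite_finite_induct) (auto simp: adj_add, simp_all add: adj_def vec_eq_iff)

lemma trace_adj: "trace (adj A) = cnj (trace (A::complex^'n::finite^'n))"
  by (simp add: adj_def trace_def)

lemma trace_sum: "trace (\<Sum>i\<in>S. f i) = (\<Sum>i\<in>S. trace (f i :: complex^'n::finite^'n))"
  by (induction S rule: infinite_finite_induct) (auto simp: trace_add, simp_all add: trace_def)

lemma matrix_add_rdistrib: "(A + B) ** C = A ** C + B ** (C::complex^'n::finite^'n)"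
  by (simp add: vec_eq_iff matrix_matrix_mult_def algebra_simps sum.distrib)

lemma sum_mm_left: "(\<Sum>i\<in>S. f i) ** (B::complex^'n::finite^'n) = (\<Sum>i\<in>S. f i ** B)"
  by (induction S rule: infinite_finite_induct) (auto simp: matrix_add_rdistrib)

lemma sum_mm_right: "(B::complex^'n::finite^'n) ** (\<Sum>i\<in>S. f i) = (\<Sum>i\<in>S. B ** f i)"
  by (induction S rule: infinite_finite_induct) (auto simp: matrix_add_ldistrib)

lemma sum_mid: "(\<Sum>i\<in>S. P ** f i ** Q) = (P::complex^'n::finite^'n) ** (\<Sum>i\<in>S. f i :: complex^'n^'n) ** (Q::complex^'n::finite^'n)"
  by (simp add: sum_mm_left sum_mm_right)

lemma adj_mat1[simp]: "adj (mat 1 :: complex^'n::finite^'n) = mat 1"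
  by (simp add: adj_def mat_def vec_eq_iff)

lemma adj_zero[simp]: "adj (0 :: complex^'n::finite^'n) = 0"
  by (simp add: adj_def vec_eq_iff)

lemma trace_zero[simp]: "trace (0::complex^'n::finite^'n) = 0"
  by (simp add: trace_def)

lemma L0: "{ms::'d list. length ms = 0} = {[]}" by auto

lemma sum_L_Suc:
  "(\<Sum>ms\<in>{ms::'d::finite list. length ms = Suc n}. f ms) = (\<Sum>m\<in>UNIV. \<Sum>ms\<in>{ms. length ms = n}. f (m # ms))"
proof -
  have eq: "{ms::'d list. length ms = Suc n} = (\<lambda>(m,ms). m # ms) ` (UNIV \<times> {ms. length ms = n})"
    by (auto simp: image_iff length_Suc_conv)
  have inj: "inj_on (\<lambda>(m::'d,ms). m # ms) (UNIV \<times> {ms. length ms = n})"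
    by (auto simp: inj_on_def)
  show ?thesis
    unfolding eq sum.reindex[OF inj]
    by (simp add: sum.cartesian_product finite_lists_length_eq case_prod_unfold)
qed

definition Gm :: "('d::finite \<Rightarrow> complex^'n::finite^'n) \<Rightarrow> ('d \<Rightarrow> complex^'n^'n) \<Rightarrow> complex^'n^'n \<Rightarrow> complex^'n^'n" where
  "Gm A B Y = (\<Sum>m\<in>UNIV. A m ** Y ** adj (B m))"

definition cfun :: "('d::finite \<Rightarrow> complex^'n::finite^'n) \<Rightarrow> ('d \<Rightarrow> complex^'n^'n) \<Rightarrow> nat \<Rightarrow> complex^'n^'n \<Rightarrow> complex" where
  "cfun K Kd n Y = (\<Sum>ms\<in>{ms. length ms = n}. trace (prodK K ms ** Y ** adj (dprodK K Kd ms)))"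

definition sfun :: "('d::finite \<Rightarrow> complex^'n::finite^'n) \<Rightarrow> ('d \<Rightarrow> complex^'n^'n) \<Rightarrow> nat \<Rightarrow> complex^'n^'n \<Rightarrow> complex" where
  "sfun K Kd n Y = (\<Sum>ms\<in>{ms. length ms = n}. trace (dprodK K Kd ms ** Y ** adj (dprodK K Kd ms)))"

lemma chan_Gm: "chan K Y = Gm K K Y"
  by (simp add: chan_def Gm_def)

lemma adj_Gm: "adj (Gm A B Y) = Gm B A (adj Y)"
  by (simp add: Gm_def adj_sum adj_mult matrix_mul_assoc)

lemma sum_trace_mid: "(\<Sum>m\<in>S. trace (P ** X m ** Q)) = trace ((P::complex^'n::finite^'n) ** (\<Sum>m\<in>S. X m :: complex^'n^'n) ** (Q::complex^'n^'n))"
  by (simp add: trace_sum[symmetric] sum_mid)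

context
  fixes K Kd :: "'d::finite \<Rightarrow> complex^'n::finite^'n"
  assumes kraus: "(\<Sum>m\<in>UNIV. adj (K m) ** K m) = mat 1"
begin

lemma PP: "(\<Sum>ms\<in>{ms. length ms = n}. adj (prodK K ms) ** prodK K ms) = mat 1"
proof (induction n)
  case 0
  then show ?case by (simp add: L0)
next
  case (Suc n)
  have "(\<Sum>ms\<in>{ms. length ms = Suc n}. adj (prodK K ms) ** prodK K ms)
     = (\<Sum>m\<in>UNIV. \<Sum>ms\<in>{ms. length ms = n}. adj (K m) ** (adj (prodK K ms) ** prodK K ms) ** K m)"
    unfolding sum_L_Suc by (simp add: adj_mult matrix_mul_assoc)
  also have "\<dots> = (\<Sum>m\<in>UNIV. adj (K m) ** K m)"
    by (simp add: sum_mid Suc)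
  finally show ?case using kraus by simp
qed

lemma trPP: "(\<Sum>ms\<in>{ms. length ms = n}. trace (prodK K ms ** Z ** adj (prodK K ms))) = trace Z"
proof -
  have "\<And>ms. trace (prodK K ms ** Z ** adj (prodK K ms)) = trace ((adj (prodK K ms) ** prodK K ms) ** Z)"
    by (metis trace_mul_sym matrix_mul_assoc)
  then show ?thesis
    by (simp add: trace_sum[symmetric] sum_mm_left[symmetric] PP)
qed

lemma c_Suc: "cfun K Kd (Suc n) Y = cfun K Kd n (chan K Y) + trace (Gm K Kd Y)"
proof -
  let ?P = "prodK K" and ?dP = "dprodK K Kd"
  have t: "\<And>ms m. trace (?P (m#ms) ** Y ** adj (?dP (m#ms)))
     = trace (?P ms ** (K m ** Y ** adj (Kd m)) ** adj (?P ms)) + trace (?P ms ** (K m ** Y ** adj (K m)) ** adj (?dP ms))"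
    by (simp add: adj_add adj_mult matrix_add_ldistrib trace_add matrix_mul_assoc)
  have "cfun K Kd (Suc n) Y = (\<Sum>ms\<in>{ms. length ms = n}. \<Sum>m\<in>UNIV. trace (?P ms ** (K m ** Y ** adj (Kd m)) ** adj (?P ms)))
     + (\<Sum>ms\<in>{ms. length ms = n}. \<Sum>m\<in>UNIV. trace (?P ms ** (K m ** Y ** adj (K m)) ** adj (?dP ms)))"
    unfolding cfun_def sum_L_Suc t sum.distrib
    by (subst sum.swap, subst (2) sum.swap, rule refl)
  also have "\<dots> = (\<Sum>ms\<in>{ms. length ms = n}. trace (?P ms ** Gm K Kd Y ** adj (?P ms)))
     + (\<Sum>ms\<in>{ms. length ms = n}. trace (?P ms ** chan K Y ** adj (?dP ms)))"
    by (simp add: sum_trace_mid Gm_def chan_def)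
  also have "\<dots> = trace (Gm K Kd Y) + cfun K Kd n (chan K Y)"
    by (simp add: trPP cfun_def)
  finally show ?thesis by simp
qed

lemma c_formula: "cfun K Kd n Y = (\<Sum>k<n. trace (Gm K Kd ((chan K ^^ k) Y)))"
proof (induction n arbitrary: Y)
  case 0
  then show ?case by (simp add: cfun_def L0)
next
  case (Suc n)
  show ?case
    unfolding c_Suc Suc sum.lessThan_Suc_shift
    by (simp add: funpow_Suc_right del: funpow.simps)
qed

lemma s_Suc:
  assumes fx: "chan K \<rho> = \<rho>" and h: "adj \<rho> = \<rho>"
  shows "sfun K Kd (Suc n) \<rho> = sfun K Kd n \<rho> + cfun K Kd n (Gm Kd K \<rho>) + cnj (cfun K Kd n (Gm Kd K \<rho>)) + trace (Gm Kd Kd \<rho>)"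
proof -
  let ?P = "prodK K" and ?dP = "dprodK K Kd"
  have t: "\<And>ms m. trace (?dP (m#ms) ** \<rho> ** adj (?dP (m#ms)))
     = trace (?P ms ** (Kd m ** \<rho> ** adj (Kd m)) ** adj (?P ms))
     + trace (?P ms ** (Kd m ** \<rho> ** adj (K m)) ** adj (?dP ms))
     + trace (?dP ms ** (K m ** \<rho> ** adj (Kd m)) ** adj (?P ms))
     + trace (?dP ms ** (K m ** \<rho> ** adj (K m)) ** adj (?dP ms))"
    by (simp only: dprodK.simps adj_add adj_mult matrix_add_ldistrib matrix_add_rdistrib trace_add matrix_mul_assoc add.assoc add.left_commute)
  have "sfun K Kd (Suc n) \<rho> = (\<Sum>ms\<in>{ms. length ms = n}. \<Sum>m\<in>UNIV. trace (?P ms ** (Kd m ** \<rho> ** adj (Kd m)) ** adj (?P ms)))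
     + (\<Sum>ms\<in>{ms. length ms = n}. \<Sum>m\<in>UNIV. trace (?P ms ** (Kd m ** \<rho> ** adj (K m)) ** adj (?dP ms)))
     + (\<Sum>ms\<in>{ms. length ms = n}. \<Sum>m\<in>UNIV. trace (?dP ms ** (K m ** \<rho> ** adj (Kd m)) ** adj (?P ms)))
     + (\<Sum>ms\<in>{ms. length ms = n}. \<Sum>m\<in>UNIV. trace (?dP ms ** (K m ** \<rho> ** adj (K m)) ** adj (?dP ms)))"
    unfolding sfun_def sum_L_Suc t sum.distrib
    by (subst sum.swap, subst (2) sum.swap, subst (3) sum.swap, subst (4) sum.swap, rule refl)
  also have "\<dots> = (\<Sum>ms\<in>{ms. length ms = n}. trace (?P ms ** Gm Kd Kd \<rho> ** adj (?P ms)))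
     + (\<Sum>ms\<in>{ms. length ms = n}. trace (?P ms ** Gm Kd K \<rho> ** adj (?dP ms)))
     + (\<Sum>ms\<in>{ms. length ms = n}. trace (?dP ms ** Gm K Kd \<rho> ** adj (?P ms)))
     + (\<Sum>ms\<in>{ms. length ms = n}. trace (?dP ms ** chan K \<rho> ** adj (?dP ms)))"
    by (simp add: sum_trace_mid Gm_def chan_def)
  also have "(\<Sum>ms\<in>{ms. length ms = n}. trace (?dP ms ** Gm K Kd \<rho> ** adj (?P ms)))
      = cnj (cfun K Kd n (Gm Kd K \<rho>))"
  proof -
    have "\<And>ms. trace (?dP ms ** Gm K Kd \<rho> ** adj (?P ms)) = cnj (trace (?P ms ** Gm Kd K \<rho> ** adj (?dP ms)))"
    proof -
      fix ms
      have "adj (?dP ms ** Gm K Kd \<rho> ** adj (?P ms)) = ?P ms ** Gm Kd K \<rho> ** adj (?dP ms)"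
        by (simp add: adj_mult adj_Gm h matrix_mul_assoc)
      then show "trace (?dP ms ** Gm K Kd \<rho> ** adj (?P ms)) = cnj (trace (?P ms ** Gm Kd K \<rho> ** adj (?dP ms)))"
        by (metis trace_adj complex_cnj_cnj)
    qed
    then show ?thesis by (simp add: cfun_def)
  qed
  finally show ?thesis
    by (simp add: trPP fx cfun_def sfun_def)
qed

end


lemma L1:
  fixes A B :: "complex^'n::finite^'n" and \<xi> :: "'n \<Rightarrow> 'n \<Rightarrow> complex"
  assumes purif: "\<And>s s'. \<rho> $ s $ s' = (\<Sum>a\<in>UNIV. \<xi> a s * cnj (\<xi> a s'))"
  shows "(\<Sum>a\<in>UNIV. \<Sum>s\<in>UNIV. cnj ((A *v (\<chi> s'. \<xi> a s')) $ s) * (B *v (\<chi> s'. \<xi> a s')) $ s)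
       = trace (B ** \<rho> ** adj A)"
proof -
  have "trace (B ** \<rho> ** adj A) = (\<Sum>s\<in>UNIV. \<Sum>j\<in>UNIV. \<Sum>i\<in>UNIV. \<Sum>a\<in>UNIV. B$s$i * \<xi> a i * cnj (\<xi> a j) * cnj (A$s$j))"
    by (simp add: trace_def matrix_matrix_mult_def adj_def purif sum_distrib_left sum_distrib_right mult_ac)
  also have "\<dots> = (\<Sum>s\<in>UNIV. \<Sum>a\<in>UNIV. \<Sum>j\<in>UNIV. \<Sum>i\<in>UNIV. B$s$i * \<xi> a i * cnj (\<xi> a j) * cnj (A$s$j))"
  proof (rule sum.cong[OF refl])
    fix s
    have "(\<Sum>j\<in>UNIV. \<Sum>i\<in>UNIV. \<Sum>a\<in>UNIV. B$s$i * \<xi> a i * cnj (\<xi> a j) * cnj (A$s$j))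
        = (\<Sum>j\<in>UNIV. \<Sum>a\<in>UNIV. \<Sum>i\<in>UNIV. B$s$i * \<xi> a i * cnj (\<xi> a j) * cnj (A$s$j))"
      by (rule sum.cong[OF refl], rule sum.swap)
    also have "\<dots> = (\<Sum>a\<in>UNIV. \<Sum>j\<in>UNIV. \<Sum>i\<in>UNIV. B$s$i * \<xi> a i * cnj (\<xi> a j) * cnj (A$s$j))"
      by (rule sum.swap)
    finally show "(\<Sum>j\<in>UNIV. \<Sum>i\<in>UNIV. \<Sum>a\<in>UNIV. B$s$i * \<xi> a i * cnj (\<xi> a j) * cnj (A$s$j))
        = (\<Sum>a\<in>UNIV. \<Sum>j\<in>UNIV. \<Sum>i\<in>UNIV. B$s$i * \<xi> a i * cnj (\<xi> a j) * cnj (A$s$j))" .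
  qed
  also have "\<dots> = (\<Sum>a\<in>UNIV. \<Sum>s\<in>UNIV. \<Sum>j\<in>UNIV. \<Sum>i\<in>UNIV. B$s$i * \<xi> a i * cnj (\<xi> a j) * cnj (A$s$j))"
    by (rule sum.swap)
  also have "\<dots> = (\<Sum>a\<in>UNIV. \<Sum>s\<in>UNIV. cnj ((A *v (\<chi> s'. \<xi> a s')) $ s) * (B *v (\<chi> s'. \<xi> a s')) $ s)"
    by (simp add: matrix_vector_mult_def sum_distrib_left sum_distrib_right mult_ac)
  finally show ?thesis by simp
qed

lemma comb: "(\<Sum>j<T. \<Sum>k<j. r k) = (\<Sum>k<T - 1. real (T - k - 1) * (r k :: real))"
proof -
  have "(\<Sum>k<T - 1. real (T - k - 1) * r k) = (\<Sum>k<T. real (T - k - 1) * r k)"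
  proof (cases T)
    case (Suc T')
    then show ?thesis by simp
  qed simp
  moreover have "(\<Sum>j<T. \<Sum>k<j. r k) = (\<Sum>k<T. real (T - k - 1) * r k)"
  proof (induction T)
    case (Suc T)
    have "(\<Sum>k<Suc T. real (Suc T - k - 1) * r k) = (\<Sum>k<T. real (T - k - 1) * r k) + (\<Sum>k<T. r k)"
      by (simp add: sum.distrib[symmetric] of_nat_diff algebra_simps)
    then show ?case using Suc by simp
  qed simp
  ultimately show ?thesis by simp
qed

lemma s_formula:
  fixes K Kd :: "'d::finite \<Rightarrow> complex^'n::finite^'n"
  assumes kraus: "(\<Sum>m\<in>UNIV. adj (K m) ** K m) = mat 1"
    and fx: "chan K \<rho> = \<rho>" and h: "adj \<rho> = \<rho>"
  shows "sfun K Kd n \<rho> = of_nat n * trace (Gm Kd Kd \<rho>)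
           + (\<Sum>j<n. cfun K Kd j (Gm Kd K \<rho>) + cnj (cfun K Kd j (Gm Kd K \<rho>)))"
proof (induction n)
  case 0
  then show ?case by (simp add: sfun_def L0)
next
  case (Suc n)
  then show ?case using s_Suc[OF kraus fx h, of Kd n] by (simp add: algebra_simps)
qed

lemma adj_pow: "adj ((chan K ^^ k) Y) = (chan K ^^ k) (adj Y)"
  by (induction k) (simp_all add: chan_Gm adj_Gm)

lemma pow_fix: "chan K \<rho> = \<rho> \<Longrightarrow> (chan K ^^ k) \<rho> = \<rho>"
  by (induction k) simp_all

lemma beta_rel:
  assumes h: "adj \<rho> = \<rho>"
  shows "trace (Gm K Kd ((chan K ^^ k) (Gm Kd K \<rho>))) = cnj (trace (Gm Kd K ((chan K ^^ k) (Gm K Kd \<rho>))))"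
proof -
  have "adj (Gm K Kd ((chan K ^^ k) (Gm Kd K \<rho>))) = Gm Kd K ((chan K ^^ k) (Gm K Kd \<rho>))"
    by (simp add: adj_Gm adj_pow h)
  then show ?thesis by (metis trace_adj complex_cnj_cnj)
qed



lemma sum3:
  assumes "finite L"
  shows "(\<Sum>i\<in>(UNIV::'a::finite set)\<times>(UNIV::'b::finite set)\<times>L. g i) = (\<Sum>ms\<in>L. \<Sum>a\<in>UNIV. \<Sum>s\<in>UNIV. g (a,s,ms))"
proof -
  have "(\<Sum>i\<in>(UNIV::'a set)\<times>(UNIV::'b set)\<times>L. g i) = (\<Sum>a\<in>UNIV. \<Sum>s\<in>UNIV. \<Sum>ms\<in>L. g (a,s,ms))"
    by (simp add: sum.cartesian_product')
  also have "\<dots> = (\<Sum>a\<in>UNIV. \<Sum>ms\<in>L. \<Sum>s\<in>UNIV. g (a,s,ms))"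
    by (rule sum.cong[OF refl], rule sum.swap)
  also have "\<dots> = (\<Sum>ms\<in>L. \<Sum>a\<in>UNIV. \<Sum>s\<in>UNIV. g (a,s,ms))"
    by (rule sum.swap)
  finally show ?thesis .
qed

theorem mainTheorem1:
  fixes K :: "real \<Rightarrow> 'd::finite \<Rightarrow> complex^'D::finite^'D"
    and \<theta>0 :: real
    and \<rho> :: "complex^'D^'D"
    and \<xi> :: "'D \<Rightarrow> 'D \<Rightarrow> complex"
    and T :: nat
  assumes diff: "\<And>\<theta> m. (\<lambda>t. K t m) differentiable (at \<theta>)"
    and kraus: "\<And>\<theta>. (\<Sum>m\<in>UNIV. adj (K \<theta> m) ** K \<theta> m) = mat 1"
    and dens: "is_density \<rho>"
    and fixed: "chan (K \<theta>0) \<rho> = \<rho>"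
    and purif: "\<And>s s'. \<rho> $ s $ s' = (\<Sum>a\<in>UNIV. \<xi> a s * cnj (\<xi> a s'))"
    and T: "T \<ge> 1"
  shows
    "let Km = K \<theta>0;
         Kd = (\<lambda>m. vector_derivative (\<lambda>t. K t m) (at \<theta>0));
         \<alpha> = (\<Sum>m\<in>UNIV. trace (Kd m ** \<rho> ** adj (Kd m)));
         \<gamma> = (\<Sum>m\<in>UNIV. trace (Km m ** \<rho> ** adj (Kd m)));
         \<beta> = (\<lambda>\<tau>::nat. trace (\<Sum>m\<in>UNIV. Kd m ** (chan Km ^^ \<tau>)
                       (\<Sum>n\<in>UNIV. Km n ** \<rho> ** adj (Kd n)) ** adj (Km m)))
     in complex_of_real (qfi (Phi_index T) (Phi K \<xi> T) \<theta>0)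
        = 4 * (of_nat T * \<alpha>
               + 2 * (\<Sum>\<tau><T - 1. of_real (real (T - \<tau> - 1) * Re (\<beta> \<tau>)))
               - of_nat (T^2) * of_real ((cmod \<gamma>)^2))"
proof -
  define Km where "Km = K \<theta>0"
  define Kd where "Kd = (\<lambda>m. vector_derivative (\<lambda>t. K t m) (at \<theta>0))"
  have der: "\<And>m. ((\<lambda>t. K t m) has_vector_derivative Kd m) (at \<theta>0)"
    using diff vector_derivative_works unfolding Kd_def by blast
  have kr: "(\<Sum>m\<in>UNIV. adj (Km m) ** Km m) = mat 1" using kraus unfolding Km_def by blast
  have h: "adj \<rho> = \<rho>" using dens unfolding is_density_def by blast
  have fx: "chan Km \<rho> = \<rho>" using fixed unfolding Km_def .
  have fL: "finite {ms::'d list. length ms = T}" using finite_lists_length_eq[of "UNIV::'d set" T] by simp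
  define d\<psi> where "d\<psi> = (\<lambda>i. vector_derivative (\<lambda>\<theta>. Phi K \<xi> T \<theta> i) (at \<theta>0))"
  have dpsi: "\<And>a s ms. length ms = T \<Longrightarrow> d\<psi> (a,s,ms) = (dprodK Km Kd ms *v (\<chi> s'. \<xi> a s')) $ s"
    by (simp add: d\<psi>_def Phi_def Phi_deriv[OF der] Km_def)
  have psi: "\<And>a s ms. length ms = T \<Longrightarrow> Phi K \<xi> T \<theta>0 (a,s,ms) = (prodK Km ms *v (\<chi> s'. \<xi> a s')) $ s"
    by (simp add: Phi_def Km_def)
  have S1: "(\<Sum>i\<in>Phi_index T. cnj (d\<psi> i) * d\<psi> i) = sfun Km Kd T \<rho>"
    unfolding Phi_index_def sum3[OF fL] sfun_def
    by (rule sum.cong[OF refl], simp add: dpsi L1[OF purif])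
  have S2: "(\<Sum>i\<in>Phi_index T. cnj (d\<psi> i) * Phi K \<xi> T \<theta>0 i) = cfun Km Kd T \<rho>"
    unfolding Phi_index_def sum3[OF fL] cfun_def
    by (rule sum.cong[OF refl], simp add: dpsi psi L1[OF purif])
  define \<alpha> where "\<alpha> = (\<Sum>m\<in>UNIV. trace (Kd m ** \<rho> ** adj (Kd m)))"
  define \<gamma> where "\<gamma> = (\<Sum>m\<in>UNIV. trace (Km m ** \<rho> ** adj (Kd m)))"
  define \<beta> where "\<beta> = (\<lambda>\<tau>::nat. trace (\<Sum>m\<in>UNIV. Kd m ** (chan Km ^^ \<tau>)
                       (\<Sum>n\<in>UNIV. Km n ** \<rho> ** adj (Kd n)) ** adj (Km m)))"
  have \<alpha>G: "\<alpha> = trace (Gm Kd Kd \<rho>)" by (simp add: \<alpha>_def Gm_def trace_sum)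
  have \<gamma>G: "\<gamma> = trace (Gm Km Kd \<rho>)" by (simp add: \<gamma>_def Gm_def trace_sum)
  have \<beta>G: "\<And>k. \<beta> k = trace (Gm Kd Km ((chan Km ^^ k) (Gm Km Kd \<rho>)))" by (simp add: \<beta>_def Gm_def)
  have \<alpha>real: "\<alpha> = of_real (Re \<alpha>)"
  proof -
    have "adj (Gm Kd Kd \<rho>) = Gm Kd Kd \<rho>" by (simp add: adj_Gm h)
    then have "cnj \<alpha> = \<alpha>" unfolding \<alpha>G by (metis trace_adj)
    then show ?thesis by (metis Reals_cnj_iff complex_is_Real_iff of_real_Re)
  qed
  have cT: "cfun Km Kd T \<rho> = of_nat T * \<gamma>"
    by (simp add: c_formula[OF kr] pow_fix[OF fx] \<gamma>G)
  have cj: "\<And>j. Re (cfun Km Kd j (Gm Kd Km \<rho>)) = (\<Sum>k<j. Re (\<beta> k))"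
    by (simp add: c_formula[OF kr] beta_rel[OF h] \<beta>G)
  have ReS: "Re (sfun Km Kd T \<rho>) = real T * Re \<alpha> + 2 * (\<Sum>k<T - 1. real (T - k - 1) * Re (\<beta> k))"
    by (simp add: s_formula[OF kr fx h] \<alpha>G[symmetric] cj comb sum_distrib_left mult.left_commute)
  have q: "qfi (Phi_index T) (Phi K \<xi> T) \<theta>0 = 4 * (Re (sfun Km Kd T \<rho>) - (cmod (of_nat T * \<gamma>))^2)"
    unfolding qfi_def Let_def d\<psi>_def[symmetric] S1 S2 cT ..
  have "complex_of_real (qfi (Phi_index T) (Phi K \<xi> T) \<theta>0)
        = 4 * (of_nat T * \<alpha>
               + 2 * (\<Sum>\<tau><T - 1. of_real (real (T - \<tau> - 1) * Re (\<beta> \<tau>)))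
               - of_nat (T^2) * of_real ((cmod \<gamma>)^2))"
    unfolding q ReS
    by (simp add: norm_mult power_mult_distrib \<alpha>real[symmetric])
  then show ?thesis
    unfolding Let_def Km_def[symmetric] Kd_def[symmetric] \<alpha>_def[symmetric] \<gamma>_def[symmetric]
    by (simp add: \<beta>_def)
qed

end
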